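(* Let $(X,\mathcal{U})$ be a sequentially complete separated uniform space, with $\mathcal{F}$ and $\mathcal{V}$ as in the context, and let $T:X\to X$ be a Ćirić-contraction. Then for each $x\in X$ the sequence $\{T^nx\}$ converges to a fixed point of $T$. Moreover, if the functions $a_2$ and $a_3$ in the contractive condition coincide on $X\times X$, then the fixed point is unique, i.e. there is a unique fixed point $x^*$ of $T$ and $\{T^nx\}$ converges to $x^*$ for every $x\in X$.
   Context: A uniform space $(X,\mathcal{U})$ is a nonempty set $X$ with a uniformity $\mathcal{U}$ on $X$. For $U,V\subseteq X\times X$, $\Delta(X)=\{(x,x):x\in X\}$ and $U\circ V=\{(x,y):\exists z\in X,\ (x,z)\in V,\ (z,y)\in U\}$. $X$ is separated if $\bigcap\mathcal{U}=\Delta(X)$. A sequence $\{x_n\}$ converges to $x$ if for every $U\in\mathcal{U}$ there is $N$ with $(x_n,x)\in U$ for $n\ge N$; it is Cauchy if for every $U\in\mathcal{U}$ there is $N$ with $(x_m,x_n)\in U$ for $m,n\ge N$; $X$ is sequentially complete if every Cauchy sequence converges. $\mathcal{F}$ is a nonempty collection of (uniformly continuous) pseudometrics on $X$ generating $\mathcal{U}$, and $\mathcal{V}$ is the family of all sets $V=\bigcap_{i=1}^m\{(x,y)\in X\times X:\rho_i(x,y)<r_i\}$ with $m\ge1$, $\rho_i\in\mathcal{F}$, $r_i>0$; $\mathcal{V}$ is a base for $\mathcal{U}$. For such $V$ and $\beta>0$, $\beta V=\bigcap_{i=1}^m\{(x,y):\rho_i(x,y)<\beta r_i\}$. A map $T:X\to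 X$ is a Ćirić-contraction if there are positive-valued functions $a_1,a_2,a_3,a_4$ on $X\times X$ with $\sup\{a_1(x,y)+a_2(x,y)+a_3(x,y)+2a_4(x,y):x,y\in X\}<1$ such that for all $x,y\in X$ and all $V_1,\dots,V_5\in\mathcal{V}$: if $(x,y)\in V_1$, $(x,Tx)\in V_2$, $(y,Ty)\in V_3$, $(x,Ty)\in V_4$, $(y,Tx)\in V_5$, then $(Tx,Ty)\in a_1(x,y)V_1\circ a_2(x,y)V_2\circ a_3(x,y)V_3\circ a_4(x,y)V_4\circ a_4(x,y)V_5$. *)

theory Defs
  imports Complex_Main "HOL-Library.FuncSet"
begin

definition pseudometric_on :: "'a set \<Rightarrow> ('a \<Rightarrow> 'a \<Rightarrow> real) \<Rightarrow> bool" where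
  "pseudometric_on X \<rho> \<longleftrightarrow>
     (\<forall>x\<in>X. \<forall>y\<in>X. \<rho> x y \<ge> 0 \<and> \<rho> x y = \<rho> y x) \<and>
     (\<forall>x\<in>X. \<rho> x x = 0) \<and>
     (\<forall>x\<in>X. \<forall>y\<in>X. \<forall>z\<in>X. \<rho> x z \<le> \<rho> x y + \<rho> y z)"

text \<open>A basic entourage V = \<Inter>_i {(x,y). \<rho>_i x y < r_i} is represented by the
(nonempty) list of its data (\<rho>_i, r_i).\<close>

definition valid_data :: "('a \<Rightarrow> 'a \<Rightarrow> real) set \<Rightarrow> (('a \<Rightarrow> 'a \<Rightarrow> real) \<times> real) list \<Rightarrow> bool" where
  "valid_data F ps \<longleftrightarrow> ps \<noteq> [] \<and> (\<forall>(\<rho>, r) \<in> set ps. \<rho> \<in> F \<and> r > 0)"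

definition ent :: "'a set \<Rightarrow> (('a \<Rightarrow> 'a \<Rightarrow> real) \<times> real) list \<Rightarrow> ('a \<times> 'a) set" where
  "ent X ps = {(x, y). x \<in> X \<and> y \<in> X \<and> (\<forall>(\<rho>, r) \<in> set ps. \<rho> x y < r)}"

definition scale_data :: "real \<Rightarrow> (('a \<Rightarrow> 'a \<Rightarrow> real) \<times> real) list \<Rightarrow> (('a \<Rightarrow> 'a \<Rightarrow> real) \<times> real) list" where
  "scale_data \<beta> ps = map (\<lambda>(\<rho>, r). (\<rho>, \<beta> * r)) ps"

definition base_ents :: "'a set \<Rightarrow> ('a \<Rightarrow> 'a \<Rightarrow> real) set \<Rightarrow> ('a \<times> 'a) set set" where
  "base_ents X F = {ent X ps | ps. valid_data F ps}"

definition unif :: "'a set \<Rightarrow> ('a \<Rightarrow> 'a \<Rightarrow> real) set \<Rightarrow> ('a \<times> 'a) set set" where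
  "unif X F = {U. U \<subseteq> X \<times> X \<and> (\<exists>V \<in> base_ents X F. V \<subseteq> U)}"

definition ucomp :: "'a set \<Rightarrow> ('a \<times> 'a) set \<Rightarrow> ('a \<times> 'a) set \<Rightarrow> ('a \<times> 'a) set" where
  "ucomp X U V = {(x, y). \<exists>z\<in>X. (x, z) \<in> V \<and> (z, y) \<in> U}"

definition separated :: "'a set \<Rightarrow> ('a \<Rightarrow> 'a \<Rightarrow> real) set \<Rightarrow> bool" where
  "separated X F \<longleftrightarrow> \<Inter> (unif X F) = Id_on X"

definition uconverges :: "'a set \<Rightarrow> ('a \<Rightarrow> 'a \<Rightarrow> real) set \<Rightarrow> (nat \<Rightarrow> 'a) \<Rightarrow> 'a \<Rightarrow> bool" where
  "uconverges X F s x \<longleftrightarrow> (\<forall>U \<in> unif X F. \<exists>N. \<forall>n\<ge>N. (s n, x) \<in> U)"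

definition ucauchy :: "'a set \<Rightarrow> ('a \<Rightarrow> 'a \<Rightarrow> real) set \<Rightarrow> (nat \<Rightarrow> 'a) \<Rightarrow> bool" where
  "ucauchy X F s \<longleftrightarrow> (\<forall>U \<in> unif X F. \<exists>N. \<forall>m\<ge>N. \<forall>n\<ge>N. (s m, s n) \<in> U)"

definition seq_complete :: "'a set \<Rightarrow> ('a \<Rightarrow> 'a \<Rightarrow> real) set \<Rightarrow> bool" where
  "seq_complete X F \<longleftrightarrow>
     (\<forall>s. (\<forall>n. s n \<in> X) \<and> ucauchy X F s \<longrightarrow> (\<exists>x\<in>X. uconverges X F s x))"

text \<open>Ciric-contraction with given positive functions a1..a4.
 sup (a1+a2+a3+2a4) < 1 is expressed as: bounded by some k < 1.
 The condition is required for every representation of V1..V5 \<in> \<V>.\<close>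
definition ciric_contraction ::
  "'a set \<Rightarrow> ('a \<Rightarrow> 'a \<Rightarrow> real) set \<Rightarrow> ('a \<Rightarrow> 'a) \<Rightarrow>
   ('a \<Rightarrow> 'a \<Rightarrow> real) \<Rightarrow> ('a \<Rightarrow> 'a \<Rightarrow> real) \<Rightarrow> ('a \<Rightarrow> 'a \<Rightarrow> real) \<Rightarrow> ('a \<Rightarrow> 'a \<Rightarrow> real) \<Rightarrow> bool" where
  "ciric_contraction X F T a1 a2 a3 a4 \<longleftrightarrow>
     T \<in> X \<rightarrow> X \<and>
     (\<forall>x\<in>X. \<forall>y\<in>X. a1 x y > 0 \<and> a2 x y > 0 \<and> a3 x y > 0 \<and> a4 x y > 0) \<and>
     (\<exists>k<1. \<forall>x\<in>X. \<forall>y\<in>X. a1 x y + a2 x y + a3 x y + 2 * a4 x y \<le> k) \<and>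
     (\<forall>x\<in>X. \<forall>y\<in>X. \<forall>p1 p2 p3 p4 p5.
        valid_data F p1 \<and> valid_data F p2 \<and> valid_data F p3 \<and> valid_data F p4 \<and> valid_data F p5 \<and>
        (x, y) \<in> ent X p1 \<and> (x, T x) \<in> ent X p2 \<and> (y, T y) \<in> ent X p3 \<and>
        (x, T y) \<in> ent X p4 \<and> (y, T x) \<in> ent X p5 \<longrightarrow>
        (T x, T y) \<in>
          ucomp X (ent X (scale_data (a1 x y) p1))
           (ucomp X (ent X (scale_data (a2 x y) p2))
             (ucomp X (ent X (scale_data (a3 x y) p3))
               (ucomp X (ent X (scale_data (a4 x y) p4))
                 (ent X (scale_data (a4 x y) p5))))))"

end

theory Submission
  imports Defs
begin

locale cc =
  fixes X :: "'a set" and F :: "('a \<Rightarrow> 'a \<Rightarrow> real) set" and T :: "'a \<Rightarrow> 'a"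
    and a1 a2 a3 a4 :: "'a \<Rightarrow> 'a \<Rightarrow> real" and k :: real
  assumes pm: "\<And>\<rho>. \<rho> \<in> F \<Longrightarrow> pseudometric_on X \<rho>"
  and TX: "\<And>x. x \<in> X \<Longrightarrow> T x \<in> X"
  and pos: "\<And>x y. x \<in> X \<Longrightarrow> y \<in> X \<Longrightarrow> a1 x y > 0 \<and> a2 x y > 0 \<and> a3 x y > 0 \<and> a4 x y > 0"
  and k1: "k < 1" and k0: "0 \<le> k"
  and kb: "\<And>x y. x \<in> X \<Longrightarrow> y \<in> X \<Longrightarrow> a1 x y + a2 x y + a3 x y + 2 * a4 x y \<le> k"
  and contr: "\<And>x y p1 p2 p3 p4 p5. x \<in> X \<Longrightarrow> y \<in> X \<Longrightarrow>
        valid_data F p1 \<Longrightarrow> valid_data F p2 \<Longrightarrow> valid_data F p3 \<Longrightarrow> valid_data F p4 \<Longrightarrow> valid_data F p5 \<Longrightarrow>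
        (x, y) \<in> ent X p1 \<Longrightarrow> (x, T x) \<in> ent X p2 \<Longrightarrow> (y, T y) \<in> ent X p3 \<Longrightarrow>
        (x, T y) \<in> ent X p4 \<Longrightarrow> (y, T x) \<in> ent X p5 \<Longrightarrow>
        (T x, T y) \<in>
          ucomp X (ent X (scale_data (a1 x y) p1))
           (ucomp X (ent X (scale_data (a2 x y) p2))
             (ucomp X (ent X (scale_data (a3 x y) p3))
               (ucomp X (ent X (scale_data (a4 x y) p4))
                 (ent X (scale_data (a4 x y) p5)))))"
begin

lemma nn: "\<rho> \<in> F \<Longrightarrow> x \<in> X \<Longrightarrow> y \<in> X \<Longrightarrow> \<rho> x y \<ge> 0"
  using pm unfolding pseudometric_on_def by blast
lemma sym: "\<rho> \<in> F \<Longrightarrow> x \<in> X \<Longrightarrow> y \<in> X \<Longrightarrow> \<rho> x y = \<rho> y x"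
  using pm unfolding pseudometric_on_def by blast
lemma rf: "\<rho> \<in> F \<Longrightarrow> x \<in> X \<Longrightarrow> \<rho> x x = 0"
  using pm unfolding pseudometric_on_def by blast
lemma tri: "\<rho> \<in> F \<Longrightarrow> x \<in> X \<Longrightarrow> y \<in> X \<Longrightarrow> z \<in> X \<Longrightarrow> \<rho> x z \<le> \<rho> x y + \<rho> y z"
  using pm unfolding pseudometric_on_def by blast

lemma ent1: "(u, v) \<in> ent X [(\<rho>, r)] \<longleftrightarrow> u \<in> X \<and> v \<in> X \<and> \<rho> u v < r"
  by (simp add: ent_def)

lemma vd1: "\<rho> \<in> F \<Longrightarrow> r > 0 \<Longrightarrow> valid_data F [(\<rho>, r)]"
  by (simp add: valid_data_def)

lemma key:
  assumes r: "\<rho> \<in> F" and x: "x \<in> X" and y: "y \<in> X"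
  shows "\<rho> (T x) (T y) \<le> a1 x y * \<rho> x y + a2 x y * \<rho> x (T x) + a3 x y * \<rho> y (T y)
            + a4 x y * (\<rho> x (T y) + \<rho> y (T x))"
proof (rule field_le_epsilon)
  fix e :: real assume e: "0 < e"
  define c where "c = a1 x y + a2 x y + a3 x y + 2 * a4 x y"
  have c: "c > 0" using pos[OF x y] unfolding c_def by linarith
  define d where "d = e / c"
  have d: "d > 0" using c e unfolding d_def by simp
  have Tx: "T x \<in> X" and Ty: "T y \<in> X" using TX x y by auto
  define r1 where "r1 = \<rho> x y + d"
  define r2 where "r2 = \<rho> x (T x) + d"
  define r3 where "r3 = \<rho> y (T y) + d"
  define r4 where "r4 = \<rho> x (T y) + d"
  define r5 where "r5 = \<rho> y (T x) + d"
  have pr: "r1 > 0" "r2 > 0" "r3 > 0" "r4 > 0" "r5 > 0"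
    unfolding r1_def r2_def r3_def r4_def r5_def using d nn[OF r] x y Tx Ty by (auto simp: add_nonneg_pos)
  have "(T x, T y) \<in>
          ucomp X (ent X (scale_data (a1 x y) [(\<rho>, r1)]))
           (ucomp X (ent X (scale_data (a2 x y) [(\<rho>, r2)]))
             (ucomp X (ent X (scale_data (a3 x y) [(\<rho>, r3)]))
               (ucomp X (ent X (scale_data (a4 x y) [(\<rho>, r4)]))
                 (ent X (scale_data (a4 x y) [(\<rho>, r5)])))))"
    apply (rule contr[OF x y])
    using vd1[OF r] pr x y Tx Ty d unfolding ent1 r1_def r2_def r3_def r4_def r5_def by auto
  then obtain z1 z2 z3 z4 where
    "(T x, z4) \<in> ent X [(\<rho>, a4 x y * r5)]" "(z4, z3) \<in> ent X [(\<rho>, a4 x y * r4)]"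
    "(z3, z2) \<in> ent X [(\<rho>, a3 x y * r3)]" "(z2, z1) \<in> ent X [(\<rho>, a2 x y * r2)]"
    "(z1, T y) \<in> ent X [(\<rho>, a1 x y * r1)]"
    unfolding ucomp_def scale_data_def by auto
  then have z: "z1 \<in> X" "z2 \<in> X" "z3 \<in> X" "z4 \<in> X"
    and h: "\<rho> (T x) z4 < a4 x y * r5" "\<rho> z4 z3 < a4 x y * r4" "\<rho> z3 z2 < a3 x y * r3"
       "\<rho> z2 z1 < a2 x y * r2" "\<rho> z1 (T y) < a1 x y * r1"
    unfolding ent1 by auto
  have "\<rho> (T x) (T y) \<le> \<rho> (T x) z4 + \<rho> z4 z3 + \<rho> z3 z2 + \<rho> z2 z1 + \<rho> z1 (T y)"
    using tri[OF r] z Tx Ty by (smt (verit))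
  also have "\<dots> < a4 x y * r5 + a4 x y * r4 + a3 x y * r3 + a2 x y * r2 + a1 x y * r1"
    using h by linarith
  also have "\<dots> = a1 x y * \<rho> x y + a2 x y * \<rho> x (T x) + a3 x y * \<rho> y (T y)
            + a4 x y * (\<rho> x (T y) + \<rho> y (T x)) + c * d"
    unfolding r1_def r2_def r3_def r4_def r5_def c_def by (simp add: algebra_simps)
  also have "c * d = e" unfolding d_def using c by simp
  finally show "\<rho> (T x) (T y) \<le> a1 x y * \<rho> x y + a2 x y * \<rho> x (T x) + a3 x y * \<rho> y (T y)
            + a4 x y * (\<rho> x (T y) + \<rho> y (T x)) + e" by simp
qed


lemma iterX: "x \<in> X \<Longrightarrow> (T ^^ n) x \<in> X"
  by (induction n) (auto simp: TX)

lemma step: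
  assumes r: "\<rho> \<in> F" and x: "x \<in> X"
  shows "\<rho> ((T ^^ Suc n) x) ((T ^^ Suc (Suc n)) x) \<le> k * \<rho> ((T ^^ n) x) ((T ^^ Suc n) x)"
proof -
  define u where "u = (T ^^ n) x"
  have u: "u \<in> X" using iterX[OF x] u_def by simp
  have v: "T u \<in> X" and w: "T (T u) \<in> X" using TX u by auto
  define D0 where "D0 = \<rho> u (T u)"
  define D1 where "D1 = \<rho> (T u) (T (T u))"
  have K: "D1 \<le> a1 u (T u) * D0 + a2 u (T u) * D0 + a3 u (T u) * D1 + a4 u (T u) * (\<rho> u (T (T u)) + 0)"
    using key[OF r u v] rf[OF r v] unfolding D0_def D1_def by simp
  have t: "\<rho> u (T (T u)) \<le> D0 + D1" using tri[OF r u v w] unfolding D0_def D1_def .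
  have p: "a1 u (T u) > 0" "a2 u (T u) > 0" "a3 u (T u) > 0" "a4 u (T u) > 0" using pos[OF u v] by auto
  have b: "a1 u (T u) + a2 u (T u) + a3 u (T u) + 2 * a4 u (T u) \<le> k" using kb[OF u v] .
  have d0: "D0 \<ge> 0" "D1 \<ge> 0" using nn[OF r] u v w unfolding D0_def D1_def by auto
  define s where "s = a3 u (T u) + a4 u (T u)"
  have "a4 u (T u) * \<rho> u (T (T u)) \<le> a4 u (T u) * (D0 + D1)"
    using t p by (simp add: mult_left_mono)
  then have A: "D1 * (1 - s) \<le> (a1 u (T u) + a2 u (T u) + a4 u (T u)) * D0"
    using K unfolding s_def by (simp add: algebra_simps)
  have "a1 u (T u) + a2 u (T u) + a4 u (T u) \<le> k * (1 - s)"
  proof -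
    have "s * k \<le> s" using k1 p unfolding s_def by (simp add: mult_left_le)
    then show ?thesis using b unfolding s_def by (simp add: algebra_simps)
  qed
  then have "(a1 u (T u) + a2 u (T u) + a4 u (T u)) * D0 \<le> k * (1 - s) * D0"
    using d0 by (simp add: mult_right_mono)
  with A have "D1 * (1 - s) \<le> (k * D0) * (1 - s)" by (simp add: algebra_simps)
  moreover have "1 - s > 0" using b p k1 unfolding s_def by linarith
  ultimately have "D1 \<le> k * D0" by simp
  then show ?thesis unfolding D0_def D1_def u_def by simp
qed

lemma geo:
  assumes r: "\<rho> \<in> F" and x: "x \<in> X"
  shows "\<rho> ((T ^^ n) x) ((T ^^ Suc n) x) \<le> k ^ n * \<rho> x (T x)"
proof (induction n)
  case 0 then show ?case by simp
next
  case (Suc n)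
  have "\<rho> ((T ^^ Suc n) x) ((T ^^ Suc (Suc n)) x) \<le> k * \<rho> ((T ^^ n) x) ((T ^^ Suc n) x)"
    by (rule step[OF r x])
  also have "\<dots> \<le> k * (k ^ n * \<rho> x (T x))" using Suc k0 by (simp add: mult_left_mono)
  finally show ?case by simp
qed

lemma cb:
  assumes r: "\<rho> \<in> F" and x: "x \<in> X"
  shows "\<rho> ((T ^^ m) x) ((T ^^ (m + j)) x) \<le> \<rho> x (T x) * k ^ m * (1 - k ^ j) / (1 - k)"
proof (induction j)
  case 0 then show ?case using rf[OF r iterX[OF x]] by simp
next
  case (Suc j)
  have "\<rho> ((T ^^ m) x) ((T ^^ (m + Suc j)) x) \<le> \<rho> ((T ^^ m) x) ((T ^^ (m + j)) x) + \<rho> ((T ^^ (m + j)) x) ((T ^^ Suc (m + j)) x)"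
    using tri[OF r iterX[OF x, of m] iterX[OF x, of "m + j"] iterX[OF x, of "Suc (m + j)"]] by simp
  also have "\<dots> \<le> \<rho> x (T x) * k ^ m * (1 - k ^ j) / (1 - k) + k ^ (m + j) * \<rho> x (T x)"
    using Suc geo[OF r x, of "m + j"] by linarith
  also have "\<dots> = \<rho> x (T x) * k ^ m * (1 - k ^ Suc j) / (1 - k)"
    using k1 by (simp add: field_simps power_add)
  finally show ?case .
qed

lemma cb2:
  assumes r: "\<rho> \<in> F" and x: "x \<in> X" and mn: "m \<le> n"
  shows "\<rho> ((T ^^ m) x) ((T ^^ n) x) \<le> \<rho> x (T x) * k ^ m / (1 - k)"
proof -
  obtain j where n: "n = m + j" using mn le_Suc_ex by blast
  have "\<rho> ((T ^^ m) x) ((T ^^ n) x) \<le> \<rho> x (T x) * k ^ m * (1 - k ^ j) / (1 - k)"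
    using cb[OF r x] n by simp
  also have "\<dots> \<le> \<rho> x (T x) * k ^ m / (1 - k)"
  proof -
    have "\<rho> x (T x) * k ^ m \<ge> 0" using nn[OF r x TX[OF x]] k0 by simp
    moreover have "1 - k ^ j \<le> 1" using k0 by simp
    ultimately have "\<rho> x (T x) * k ^ m * (1 - k ^ j) \<le> \<rho> x (T x) * k ^ m"
      by (simp add: mult_left_le)
    then show ?thesis using k1 by (simp add: divide_right_mono)
  qed
  finally show ?thesis .
qed

lemma cauchy:
  assumes x: "x \<in> X"
  shows "ucauchy X F (\<lambda>n. (T ^^ n) x)"
  unfolding ucauchy_def
proof
  fix U assume "U \<in> unif X F"
  then obtain ps where ps: "valid_data F ps" "ent X ps \<subseteq> U"
    unfolding unif_def base_ents_def by auto
  have lim: "\<And>\<rho> r. (\<rho>, r) \<in> set ps \<Longrightarrow> eventually (\<lambda>n. \<rho> x (T x) * k ^ n / (1 - k) < r) sequentially"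
  proof -
    fix \<rho> r assume "(\<rho>, r) \<in> set ps"
    then have r: "r > 0" using ps(1) unfolding valid_data_def by auto
    have "(\<lambda>n. \<rho> x (T x) * k ^ n / (1 - k)) \<longlonglongrightarrow> \<rho> x (T x) * 0 / (1 - k)"
      using k0 k1 by (intro tendsto_intros) auto
    then show "eventually (\<lambda>n. \<rho> x (T x) * k ^ n / (1 - k) < r) sequentially"
      using r by (simp add: order_tendstoD(2))
  qed
  have "eventually (\<lambda>n. \<forall>p\<in>set ps. (case p of (\<rho>, r) \<Rightarrow> \<rho> x (T x) * k ^ n / (1 - k) < r)) sequentially"
    by (rule eventually_ball_finite) (use lim in auto)
  then obtain N where N: "\<And>n p. n \<ge> N \<Longrightarrow> p \<in> set ps \<Longrightarrow> (case p of (\<rho>, r) \<Rightarrow> \<rho> x (T x) * k ^ n / (1 - k) < r)"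
    unfolding eventually_sequentially by blast
  have main: "((T ^^ m) x, (T ^^ n) x) \<in> ent X ps" if mn: "m \<ge> N" "n \<ge> N" for m n
  proof -
    have "\<rho> ((T ^^ m) x) ((T ^^ n) x) < r" if pr: "(\<rho>, r) \<in> set ps" for \<rho> r
    proof -
      have rF: "\<rho> \<in> F" using pr ps(1) unfolding valid_data_def by auto
      have lt: "\<rho> x (T x) * k ^ min m n / (1 - k) < r" using N[OF _ pr, of "min m n"] mn by simp
      show ?thesis
      proof (cases "m \<le> n")
        case True then show ?thesis using cb2[OF rF x True] lt by simp
      next
        case False
        then have "\<rho> ((T ^^ n) x) ((T ^^ m) x) < r" using cb2[OF rF x, of n m] lt by simp
        then show ?thesis using sym[OF rF iterX[OF x] iterX[OF x]] by simp
      qed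
    qed
    then show ?thesis unfolding ent_def using iterX[OF x] by auto
  qed
  show "\<exists>N. \<forall>m\<ge>N. \<forall>n\<ge>N. ((T ^^ m) x, (T ^^ n) x) \<in> U"
    using main ps(2) by blast
qed

lemma conv_dist:
  assumes c: "uconverges X F s p" and r: "\<rho> \<in> F" and e: "e > 0"
  shows "\<exists>N. \<forall>n\<ge>N. \<rho> (s n) p < e"
proof -
  have v: "valid_data F [(\<rho>, e)]" using r e by (simp add: valid_data_def)
  have "ent X [(\<rho>, e)] \<in> base_ents X F"
    unfolding base_ents_def using v by blast
  moreover have "ent X [(\<rho>, e)] \<subseteq> X \<times> X" unfolding ent_def by blast
  ultimately have "ent X [(\<rho>, e)] \<in> unif X F"
    unfolding unif_def by blast
  then obtain N where "\<forall>n\<ge>N. (s n, p) \<in> ent X [(\<rho>, e)]" using c unfolding uconverges_def by blast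
  then have "\<forall>n\<ge>N. \<rho> (s n) p < e" by (simp add: ent_def)
  then show ?thesis by blast
qed

lemma fixed:
  assumes r: "\<rho> \<in> F" and x: "x \<in> X" and p: "p \<in> X" and c: "uconverges X F (\<lambda>n. (T ^^ n) x) p"
  shows "\<rho> p (T p) = 0"
proof -
  have Tp: "T p \<in> X" using TX p .
  define q where "q = \<rho> p (T p)"
  have "q * (1 - k) \<le> 0 + e" if e: "e > 0" for e
  proof -
    have e3: "e / 3 > 0" using e by simp
    obtain N where N: "\<And>n. n \<ge> N \<Longrightarrow> \<rho> ((T ^^ n) x) p < e / 3" using conv_dist[OF c r e3] by blast
    define u where "u = (T ^^ N) x"
    have u: "u \<in> X" and v: "T u \<in> X" using iterX[OF x] TX u_def by auto
    have h1: "\<rho> u p < e / 3" using N[of N] u_def by simp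
    have h2: "\<rho> (T u) p < e / 3" using N[of "Suc N"] u_def by simp
    have h2': "\<rho> p (T u) < e / 3" using h2 sym[OF r v p] by simp
    have K: "\<rho> (T u) (T p) \<le> a1 u p * \<rho> u p + a2 u p * \<rho> u (T u) + a3 u p * \<rho> p (T p)
            + a4 u p * (\<rho> u (T p) + \<rho> p (T u))" using key[OF r u p] .
    have t1: "q \<le> \<rho> p (T u) + \<rho> (T u) (T p)" using tri[OF r p v Tp] unfolding q_def .
    have t2: "\<rho> u (T u) \<le> \<rho> u p + \<rho> p (T u)" using tri[OF r u p v] .
    have t3: "\<rho> u (T p) \<le> \<rho> u p + q" using tri[OF r u p Tp] unfolding q_def .
    have ps: "a1 u p > 0" "a2 u p > 0" "a3 u p > 0" "a4 u p > 0" using pos[OF u p] by auto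
    have b: "a1 u p + a2 u p + a3 u p + 2 * a4 u p \<le> k" using kb[OF u p] .
    have nns: "\<rho> u p \<ge> 0" "\<rho> p (T u) \<ge> 0" "q \<ge> 0" using nn[OF r] u p v Tp q_def by auto
    have m1: "a1 u p * \<rho> u p \<le> a1 u p * (e/3)" using ps h1 by (simp add: mult_left_mono)
    have m2: "a2 u p * \<rho> u (T u) \<le> a2 u p * (2 * e / 3)"
      using ps h1 h2' t2 by (intro mult_left_mono) auto
    have m4: "a4 u p * (\<rho> u (T p) + \<rho> p (T u)) \<le> a4 u p * (2 * e / 3 + q)"
      using ps h1 h2' t3 by (intro mult_left_mono) auto
    have "q \<le> e / 3 + a1 u p * (e/3) + a2 u p * (2 * e / 3) + a3 u p * q + a4 u p * (2 * e / 3 + q)"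
      using t1 K[folded q_def] m1 m2 m4 h2' by linarith
    also have "\<dots> = e / 3 + (a1 u p + 2 * a2 u p + 2 * a4 u p) * (e / 3) + (a3 u p + a4 u p) * q"
      by (simp add: algebra_simps)
    also have "\<dots> \<le> e / 3 + 2 * (e / 3) + k * q"
    proof -
      have "(a1 u p + 2 * a2 u p + 2 * a4 u p) * (e / 3) \<le> 2 * (e / 3)"
        using ps b k1 e3 by (intro mult_right_mono) auto
      moreover have "(a3 u p + a4 u p) * q \<le> k * q"
        using ps b nns by (intro mult_right_mono) auto
      ultimately show ?thesis by linarith
    qed
    finally show ?thesis by (simp add: algebra_simps)
  qed
  then have "q * (1 - k) \<le> 0" by (rule field_le_epsilon)
  then have "q \<le> 0" using k1 by (simp add: mult_le_0_iff)
  then show ?thesis using nn[OF r p Tp] q_def by simp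
qed

lemma uniq_dist:
  assumes r: "\<rho> \<in> F" and p: "p \<in> X" "T p = p" and q: "q \<in> X" "T q = q"
  shows "\<rho> p q = 0"
proof -
  have K: "\<rho> p q \<le> a1 p q * \<rho> p q + a2 p q * 0 + a3 p q * 0 + a4 p q * (\<rho> p q + \<rho> q p)"
    using key[OF r p(1) q(1)] p q rf[OF r] by simp
  have s: "\<rho> q p = \<rho> p q" using sym[OF r q(1) p(1)] .
  have "(a1 p q + 2 * a4 p q) * \<rho> p q \<le> k * \<rho> p q"
    using kb[OF p(1) q(1)] pos[OF p(1) q(1)] nn[OF r p(1) q(1)] by (intro mult_right_mono) auto
  with K s have "\<rho> p q * (1 - k) \<le> 0" by (simp add: algebra_simps)
  then have "\<rho> p q \<le> 0" using k1 by (simp add: mult_le_0_iff)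
  then show ?thesis using nn[OF r p(1) q(1)] by simp
qed

end

lemma sep_eq:
  assumes s: "separated X F" and u: "u \<in> X" and v: "v \<in> X" and z: "\<forall>\<rho>\<in>F. \<rho> u v = 0"
  shows "u = v"
proof -
  have "(u, v) \<in> \<Inter> (unif X F)"
  proof
    fix U assume "U \<in> unif X F"
    then obtain ps where ps: "valid_data F ps" "ent X ps \<subseteq> U"
      unfolding unif_def base_ents_def by auto
    have "\<forall>(\<rho>, r)\<in>set ps. \<rho> u v < r"
    proof (intro ballI, clarify)
      fix \<rho> r assume "(\<rho>, r) \<in> set ps"
      then have rF: "\<rho> \<in> F" and rp: "r > 0" using ps(1) unfolding valid_data_def by auto
      have "\<rho> u v = 0" using bspec[OF z rF] .
      then show "\<rho> u v < r" using rp by simp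
    qed
    then have "(u, v) \<in> ent X ps" using u v unfolding ent_def by simp
    then show "(u, v) \<in> U" using ps(2) by blast
  qed
  then have "(u, v) \<in> Id_on X" using s unfolding separated_def by simp
  then show ?thesis by (rule Id_onE) simp
qed


theorem corollary1:
  fixes X :: "'a set" and F :: "('a \<Rightarrow> 'a \<Rightarrow> real) set" and T :: "'a \<Rightarrow> 'a"
    and a1 a2 a3 a4 :: "'a \<Rightarrow> 'a \<Rightarrow> real"
  assumes "X \<noteq> {}" and "F \<noteq> {}" and "\<forall>\<rho>\<in>F. pseudometric_on X \<rho>"
    and "separated X F" and "seq_complete X F"
    and "ciric_contraction X F T a1 a2 a3 a4"
  shows "(\<forall>x\<in>X. \<exists>p\<in>X. T p = p \<and> uconverges X F (\<lambda>n. (T ^^ n) x) p)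
       \<and> ((\<forall>x\<in>X. \<forall>y\<in>X. a2 x y = a3 x y) \<longrightarrow>
          (\<exists>!p. p \<in> X \<and> T p = p) \<and>
          (\<exists>p\<in>X. T p = p \<and> (\<forall>x\<in>X. uconverges X F (\<lambda>n. (T ^^ n) x) p)))"
proof -
  note cc = assms(6)[unfolded ciric_contraction_def]
  have cT: "T \<in> X \<rightarrow> X" using cc by (rule conjunct1)
  have cpos: "\<forall>x\<in>X. \<forall>y\<in>X. a1 x y > 0 \<and> a2 x y > 0 \<and> a3 x y > 0 \<and> a4 x y > 0"
    using cc by (rule conjunct1[OF conjunct2])
  have ck: "\<exists>k<1. \<forall>x\<in>X. \<forall>y\<in>X. a1 x y + a2 x y + a3 x y + 2 * a4 x y \<le> k"
    using cc by (rule conjunct1[OF conjunct2[OF conjunct2]])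
  obtain k where k1: "k < 1" and kb: "\<forall>x\<in>X. \<forall>y\<in>X. a1 x y + a2 x y + a3 x y + 2 * a4 x y \<le> k"
    using ck by blast
  obtain x0 where x0: "x0 \<in> X" using assms(1) by blast
  have k0: "0 \<le> k"
  proof -
    have "a1 x0 x0 > 0 \<and> a2 x0 x0 > 0 \<and> a3 x0 x0 > 0 \<and> a4 x0 x0 > 0" using cpos x0 by blast
    moreover have "a1 x0 x0 + a2 x0 x0 + a3 x0 x0 + 2 * a4 x0 x0 \<le> k" using kb x0 by blast
    ultimately show ?thesis by linarith
  qed
  have ccon: "\<forall>x\<in>X. \<forall>y\<in>X. \<forall>p1 p2 p3 p4 p5.
        valid_data F p1 \<and> valid_data F p2 \<and> valid_data F p3 \<and> valid_data F p4 \<and> valid_data F p5 \<and>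
        (x, y) \<in> ent X p1 \<and> (x, T x) \<in> ent X p2 \<and> (y, T y) \<in> ent X p3 \<and>
        (x, T y) \<in> ent X p4 \<and> (y, T x) \<in> ent X p5 \<longrightarrow>
        (T x, T y) \<in>
          ucomp X (ent X (scale_data (a1 x y) p1))
           (ucomp X (ent X (scale_data (a2 x y) p2))
             (ucomp X (ent X (scale_data (a3 x y) p3))
               (ucomp X (ent X (scale_data (a4 x y) p4))
                 (ent X (scale_data (a4 x y) p5)))))"
    using cc by (rule conjunct2[OF conjunct2[OF conjunct2]])
  interpret C: cc X F T a1 a2 a3 a4 k
  proof
    show "\<And>\<rho>. \<rho> \<in> F \<Longrightarrow> pseudometric_on X \<rho>" using assms(3) by blast
    show "\<And>x. x \<in> X \<Longrightarrow> T x \<in> X" using cT by (rule funcset_mem)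
    show "\<And>x y. x \<in> X \<Longrightarrow> y \<in> X \<Longrightarrow> a1 x y > 0 \<and> a2 x y > 0 \<and> a3 x y > 0 \<and> a4 x y > 0"
      using cpos by blast
    show "k < 1" by fact
    show "0 \<le> k" by fact
    show "\<And>x y. x \<in> X \<Longrightarrow> y \<in> X \<Longrightarrow> a1 x y + a2 x y + a3 x y + 2 * a4 x y \<le> k" using kb by blast
  next
    fix x y p1 p2 p3 p4 p5
    assume h: "x \<in> X" "y \<in> X" "valid_data F p1" "valid_data F p2" "valid_data F p3" "valid_data F p4"
      "valid_data F p5" "(x, y) \<in> ent X p1" "(x, T x) \<in> ent X p2" "(y, T y) \<in> ent X p3"
      "(x, T y) \<in> ent X p4" "(y, T x) \<in> ent X p5"
    show "(T x, T y) \<in>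
          ucomp X (ent X (scale_data (a1 x y) p1))
           (ucomp X (ent X (scale_data (a2 x y) p2))
             (ucomp X (ent X (scale_data (a3 x y) p3))
               (ucomp X (ent X (scale_data (a4 x y) p4))
                 (ent X (scale_data (a4 x y) p5)))))"
      apply (rule ccon[rule_format, OF h(1) h(2)])
      using h(3-12) by simp
  qed
  have part1: "\<forall>x\<in>X. \<exists>p\<in>X. T p = p \<and> uconverges X F (\<lambda>n. (T ^^ n) x) p"
  proof
    fix x assume x: "x \<in> X"
    have sc: "\<forall>s. (\<forall>n. s n \<in> X) \<and> ucauchy X F s \<longrightarrow> (\<exists>x\<in>X. uconverges X F s x)"
      using assms(5) unfolding seq_complete_def .
    have pre: "(\<forall>n. (T ^^ n) x \<in> X) \<and> ucauchy X F (\<lambda>n. (T ^^ n) x)"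
      using C.cauchy[OF x] C.iterX[OF x] by blast
    have "\<exists>p\<in>X. uconverges X F (\<lambda>n. (T ^^ n) x) p"
      using mp[OF sc[THEN spec[where x="\<lambda>n. (T ^^ n) x"]] pre] .
    then obtain p where p: "p \<in> X" and c: "uconverges X F (\<lambda>n. (T ^^ n) x) p" by blast
    have "\<forall>\<rho>\<in>F. \<rho> p (T p) = 0"
    proof
      fix \<rho> assume "\<rho> \<in> F"
      then show "\<rho> p (T p) = 0" by (rule C.fixed[OF _ x p c])
    qed
    then have "p = T p" by (rule sep_eq[OF assms(4) p C.TX[OF p]])
    then have "T p = p" by (rule sym)
    then show "\<exists>p\<in>X. T p = p \<and> uconverges X F (\<lambda>n. (T ^^ n) x) p" using p c by blast
  qed
  have uq: "p = q" if "p \<in> X" "T p = p" "q \<in> X" "T q = q" for p q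
    using sep_eq[OF assms(4) that(1) that(3)] C.uniq_dist[OF _ that] by blast
  have part2: "(\<exists>!p. p \<in> X \<and> T p = p) \<and>
          (\<exists>p\<in>X. T p = p \<and> (\<forall>x\<in>X. uconverges X F (\<lambda>n. (T ^^ n) x) p))"
  proof -
    obtain p where p: "p \<in> X" "T p = p" using part1 x0 by blast
    have "\<forall>x\<in>X. uconverges X F (\<lambda>n. (T ^^ n) x) p"
    proof
      fix x assume "x \<in> X"
      then obtain q where "q \<in> X" "T q = q" "uconverges X F (\<lambda>n. (T ^^ n) x) q" using part1 by blast
      then show "uconverges X F (\<lambda>n. (T ^^ n) x) p" using uq[OF p] by simp
    qed
    then show ?thesis using p uq by blast
  qed
  show ?thesis using part1 part2 by blast
qed

end
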